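(* Suppose the e-values are valid, i.e. $\mathbb{E}[e_t\mid\mathcal{F}_{t-1}]\le1$ a.s. whenever $\theta_t=0$. If the $\mathcal{F}_{t-1}$-measurable testing levels satisfy, almost surely for every $t\ge1$, $$\widehat{\mathrm{FDP}}^{\mathrm{LORD}}_{\mathrm{e}}(t):=\sum_{j=1}^t\frac{\alpha_j}{R_{j-1}+1}\le\alpha,$$ then $\mathrm{FDR}(t)\le\alpha$ for all $t\ge1$.
   Context: Let $\alpha\in(0,1)$ be a target level. Hypotheses are indexed by $t=1,2,\dots$; $\theta_t\in\{0,1\}$ is a fixed (non-random) indicator with $\theta_t=0$ iff the $t$-th null hypothesis is true. $e_1,e_2,\dots$ are nonnegative random variables (e-values). Testing levels $\alpha_1,\alpha_2,\dots$ are nonnegative random variables and the decisions are $\delta_t=\mathbb{1}\{e_t\ge 1/\alpha_t\}$ (with $\delta_t=0$ when $\alpha_t=0$). Let $\mathcal{F}_t=\sigma(\delta_1,\dots,\delta_t)$, $\mathcal{F}_0$ trivial; each $\alpha_t$ is required to be $\mathcal{F}_{t-1}$-measurable. $R_t=\sum_{j=1}^t\delta_j$, $R_0=0$. $\mathcal{H}_0(t)=\{j\le t:\theta_j=0\}$. $\mathrm{FDR}(t)=\mathbb{E}\big[\sum_{j\in\mathcal{H}_0(t)}\delta_j/(R_t\vee 1)\big]$. *)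

theory Defs
  imports "HOL-Probability.Probability"
begin

definition delta :: "(nat \<Rightarrow> 'a \<Rightarrow> real) \<Rightarrow> (nat \<Rightarrow> 'a \<Rightarrow> real) \<Rightarrow> nat \<Rightarrow> 'a \<Rightarrow> real" where
  "delta alpha e t \<omega> = (if alpha t \<omega> \<noteq> 0 \<and> e t \<omega> \<ge> 1 / alpha t \<omega> then 1 else 0)"

definition Rej :: "(nat \<Rightarrow> 'a \<Rightarrow> real) \<Rightarrow> (nat \<Rightarrow> 'a \<Rightarrow> real) \<Rightarrow> nat \<Rightarrow> 'a \<Rightarrow> real" where
  "Rej alpha e t \<omega> = (\<Sum>j=1..t. delta alpha e j \<omega>)"

definition filt :: "'a measure \<Rightarrow> (nat \<Rightarrow> 'a \<Rightarrow> real) \<Rightarrow> (nat \<Rightarrow> 'a \<Rightarrow> real) \<Rightarrow> nat \<Rightarrow> 'a measure" where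
  "filt M alpha e t = sigma (space M)
     {delta alpha e j -` B \<inter> space M | j B. 1 \<le> j \<and> j \<le> t \<and> B \<in> sets borel}"

definition FDR :: "'a measure \<Rightarrow> (nat \<Rightarrow> nat) \<Rightarrow> (nat \<Rightarrow> 'a \<Rightarrow> real) \<Rightarrow> (nat \<Rightarrow> 'a \<Rightarrow> real) \<Rightarrow> nat \<Rightarrow> real" where
  "FDR M theta alpha e t = (\<integral>\<omega>. (\<Sum>j\<in>{j\<in>{1..t}. theta j = 0}. delta alpha e j \<omega>)
       / max (Rej alpha e t \<omega>) 1 \<partial>M)"

end

theory Submission
  imports Defs
begin
lemma delta_meas:
  assumes "\<And>t. e t \<in> borel_measurable M" "\<And>t. alpha t \<in> borel_measurable M"
  shows "delta alpha e j \<in> borel_measurable M"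
proof -
  have [measurable]: "e j \<in> borel_measurable M" "alpha j \<in> borel_measurable M" using assms by auto
  show ?thesis unfolding delta_def[abs_def] by measurable
qed

lemma Rej_meas:
  assumes "\<And>t. e t \<in> borel_measurable M" "\<And>t. alpha t \<in> borel_measurable M"
  shows "Rej alpha e j \<in> borel_measurable M"
  unfolding Rej_def[abs_def] using delta_meas[OF assms] by measurable

lemma filt_gen_sub:
  assumes "\<And>t. e t \<in> borel_measurable M" "\<And>t. alpha t \<in> borel_measurable M"
  shows "{delta alpha e j -` B \<inter> space M | j B. 1 \<le> j \<and> j \<le> t \<and> B \<in> sets borel} \<subseteq> sets M"
  using delta_meas[OF assms] by (auto simp: measurable_sets)

lemma filt_space: "space (filt M alpha e t) = space M"
  unfolding filt_def by (simp only: space_measure_of_conv)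

lemma filt_subalg:
  assumes "\<And>t. e t \<in> borel_measurable M" "\<And>t. alpha t \<in> borel_measurable M"
  shows "subalgebra M (filt M alpha e t)"
  unfolding subalgebra_def
proof
  show "space (filt M alpha e t) = space M" by (rule filt_space)
  have sub: "{delta alpha e j -` B \<inter> space M | j B. 1 \<le> j \<and> j \<le> t \<and> B \<in> sets borel} \<subseteq> Pow (space M)"
    by auto
  show "sets (filt M alpha e t) \<subseteq> sets M"
    unfolding filt_def sets_measure_of_conv using sub sets.sigma_sets_subset[OF filt_gen_sub[OF assms]]
    by simp
qed

lemma delta_filt_meas:
  assumes "1 \<le> i" "i \<le> t"
  shows "delta alpha e i \<in> borel_measurable (filt M alpha e t)"
proof (rule measurableI)
  fix x assume "x \<in> space (filt M alpha e t)" show "delta alpha e i x \<in> space borel" by simp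
next
  fix A :: "real set" assume A: "A \<in> sets borel"
  have sub: "{delta alpha e j -` B \<inter> space M | j B. 1 \<le> j \<and> j \<le> t \<and> B \<in> sets borel} \<subseteq> Pow (space M)"
    by auto
  have "delta alpha e i -` A \<inter> space M \<in> {delta alpha e j -` B \<inter> space M | j B. 1 \<le> j \<and> j \<le> t \<and> B \<in> sets borel}"
    using assms A by blast
  then show "delta alpha e i -` A \<inter> space (filt M alpha e t) \<in> sets (filt M alpha e t)"
    unfolding filt_space unfolding filt_def by (rule in_measure_of[OF sub])
qed

lemma Rej_filt_meas: "Rej alpha e t \<in> borel_measurable (filt M alpha e t)"
  unfolding Rej_def[abs_def]
  by (rule borel_measurable_sum) (auto intro: delta_filt_meas)


theorem proposition1:
  fixes M :: "'a measure" and theta :: "nat \<Rightarrow> nat"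
    and e alpha :: "nat \<Rightarrow> 'a \<Rightarrow> real" and \<alpha> :: real
  assumes "prob_space M"
    and "0 < \<alpha>" and "\<alpha> < 1"
    and "\<And>t. theta t \<in> {0, 1}"
    and "\<And>t. e t \<in> borel_measurable M"
    and "\<And>t \<omega>. \<omega> \<in> space M \<Longrightarrow> e t \<omega> \<ge> 0"
    and "\<And>t. alpha t \<in> borel_measurable M"
    and "\<And>t \<omega>. \<omega> \<in> space M \<Longrightarrow> alpha t \<omega> \<ge> 0"
    and "\<And>t. 1 \<le> t \<Longrightarrow> alpha t \<in> borel_measurable (filt M alpha e (t - 1))"
    and "\<And>t. 1 \<le> t \<Longrightarrow> theta t = 0 \<Longrightarrow>
           AE \<omega> in M. nn_cond_exp M (filt M alpha e (t - 1)) (\<lambda>\<omega>. ennreal (e t \<omega>)) \<omega> \<le> 1"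
    and "AE \<omega> in M. \<forall>t\<ge>1. (\<Sum>j=1..t. alpha j \<omega> / (Rej alpha e (j - 1) \<omega> + 1)) \<le> \<alpha>"
  shows "\<forall>t\<ge>1. FDR M theta alpha e t \<le> \<alpha>"
proof (intro allI impI)
  fix t :: nat assume t1: "1 \<le> t"
  interpret P: prob_space M by fact
  note emeas = assms(5) assms(7)
  have [measurable]: "\<And>j. delta alpha e j \<in> borel_measurable M" by (rule delta_meas[OF emeas])
  have [measurable]: "\<And>j. Rej alpha e j \<in> borel_measurable M" by (rule Rej_meas[OF emeas])
  have [measurable]: "\<And>j. e j \<in> borel_measurable M" "\<And>j. alpha j \<in> borel_measurable M"
    using emeas by auto
  define N where "N = {j\<in>{1..t}. theta j = 0}"
  define g where "g j \<omega> = alpha j \<omega> / (Rej alpha e (j - 1) \<omega> + 1)" for j \<omega>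
  define FDP where "FDP \<omega> = (\<Sum>j\<in>N. delta alpha e j \<omega>) / max (Rej alpha e t \<omega>) 1" for \<omega>
  have finN: "finite N" unfolding N_def by auto
  have [measurable]: "\<And>j. g j \<in> borel_measurable M" unfolding g_def[abs_def] by measurable
  have [measurable]: "FDP \<in> borel_measurable M" unfolding FDP_def[abs_def] by measurable
  have d01: "delta alpha e j \<omega> = 0 \<or> delta alpha e j \<omega> = 1" for j \<omega>
    unfolding delta_def by auto
  have dnn: "delta alpha e j \<omega> \<ge> 0" for j \<omega> unfolding delta_def by auto
  have Rnn: "Rej alpha e j \<omega> \<ge> 0" for j \<omega> unfolding Rej_def by (rule sum_nonneg) (rule dnn)
  have gnn: "g j \<omega> \<ge> 0" if "\<omega> \<in> space M" for j \<omega>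
    unfolding g_def using assms(8)[OF that] Rnn[of "j-1" \<omega>] by simp
  have FDPnn: "FDP \<omega> \<ge> 0" for \<omega>
    unfolding FDP_def by (intro divide_nonneg_pos sum_nonneg dnn) auto
  have ptw: "FDP \<omega> \<le> (\<Sum>j\<in>N. g j \<omega> * e j \<omega>)" if \<omega>: "\<omega> \<in> space M" for \<omega>
  proof -
    have "FDP \<omega> = (\<Sum>j\<in>N. delta alpha e j \<omega> / max (Rej alpha e t \<omega>) 1)"
      unfolding FDP_def by (rule sum_divide_distrib)
    also have "\<dots> \<le> (\<Sum>j\<in>N. g j \<omega> * e j \<omega>)"
    proof (rule sum_mono)
      fix j assume j: "j \<in> N"
      then have j1: "1 \<le> j" "j \<le> t" unfolding N_def by auto
      show "delta alpha e j \<omega> / max (Rej alpha e t \<omega>) 1 \<le> g j \<omega> * e j \<omega>"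
      proof (cases "delta alpha e j \<omega> = 0")
        case True then show ?thesis using gnn[OF \<omega>, of j] assms(6)[OF \<omega>, of j] by simp
      next
        case False
        then have d1: "delta alpha e j \<omega> = 1" using d01 by blast
        then have a0: "alpha j \<omega> \<noteq> 0" and ea: "e j \<omega> \<ge> 1 / alpha j \<omega>"
          unfolding delta_def by (auto split: if_splits)
        have apos: "alpha j \<omega> > 0" using a0 assms(8)[OF \<omega>, of j] by simp
        have ae1: "alpha j \<omega> * e j \<omega> \<ge> 1" using ea apos by (simp add: field_simps)
        have "Rej alpha e j \<omega> = Rej alpha e (j - 1) \<omega> + delta alpha e j \<omega>"
        proof -
          obtain k where k: "j = Suc k" using j1(1) by (cases j) auto
          show ?thesis unfolding Rej_def k by (simp add: sum.cl_ivl_Suc)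
        qed
        moreover have "Rej alpha e j \<omega> \<le> Rej alpha e t \<omega>"
          unfolding Rej_def using j1(2) by (intro sum_mono2) (auto intro: dnn)
        ultimately have Rle: "Rej alpha e (j - 1) \<omega> + 1 \<le> max (Rej alpha e t \<omega>) 1"
          using d1 by simp
        have Rp: "0 < Rej alpha e (j - 1) \<omega> + 1" using Rnn[of "j-1" \<omega>] by simp
        have "delta alpha e j \<omega> / max (Rej alpha e t \<omega>) 1 = 1 / max (Rej alpha e t \<omega>) 1"
          using d1 by simp
        also have "\<dots> \<le> 1 / (Rej alpha e (j - 1) \<omega> + 1)"
          using Rle Rp by (intro divide_left_mono) auto
        also have "\<dots> \<le> (alpha j \<omega> * e j \<omega>) / (Rej alpha e (j - 1) \<omega> + 1)"
          using ae1 Rp by (intro divide_right_mono) auto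
        also have "\<dots> = g j \<omega> * e j \<omega>" unfolding g_def by simp
        finally show ?thesis .
      qed
    qed
    finally show ?thesis .
  qed
  have step: "(\<integral>\<^sup>+\<omega>. ennreal (g j \<omega>) * ennreal (e j \<omega>) \<partial>M) \<le> (\<integral>\<^sup>+\<omega>. ennreal (g j \<omega>) \<partial>M)"
    if j: "j \<in> N" for j
  proof -
    have j1: "1 \<le> j" "theta j = 0" using j unfolding N_def by auto
    let ?F = "filt M alpha e (j - 1)"
    interpret S: finite_measure_subalgebra M ?F
      by unfold_locales (rule filt_subalg[OF emeas])
    have gF: "(\<lambda>\<omega>. ennreal (g j \<omega>)) \<in> borel_measurable ?F"
    proof -
      have [measurable]: "alpha j \<in> borel_measurable ?F" using assms(9)[OF j1(1)] .
      have [measurable]: "Rej alpha e (j - 1) \<in> borel_measurable ?F" by (rule Rej_filt_meas)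
      show ?thesis unfolding g_def by measurable
    qed
    have "(\<integral>\<^sup>+\<omega>. ennreal (g j \<omega>) * ennreal (e j \<omega>) \<partial>M)
        = (\<integral>\<^sup>+\<omega>. ennreal (g j \<omega>) * nn_cond_exp M ?F (\<lambda>\<omega>. ennreal (e j \<omega>)) \<omega> \<partial>M)"
      by (rule S.nn_cond_exp_intg[OF gF, symmetric]) measurable
    also have "\<dots> \<le> (\<integral>\<^sup>+\<omega>. ennreal (g j \<omega>) \<partial>M)"
      using assms(10)[OF j1]
      by (intro nn_integral_mono_AE) (auto elim!: eventually_mono intro: mult_left_le)
    finally show ?thesis .
  qed
  have "(\<integral>\<^sup>+\<omega>. ennreal (FDP \<omega>) \<partial>M) \<le> (\<integral>\<^sup>+\<omega>. (\<Sum>j\<in>N. ennreal (g j \<omega>) * ennreal (e j \<omega>)) \<partial>M)"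
  proof (rule nn_integral_mono)
    fix \<omega> assume \<omega>: "\<omega> \<in> space M"
    have "(\<Sum>j\<in>N. ennreal (g j \<omega>) * ennreal (e j \<omega>)) = (\<Sum>j\<in>N. ennreal (g j \<omega> * e j \<omega>))"
      using gnn[OF \<omega>] assms(6)[OF \<omega>] by (intro sum.cong refl) (simp add: ennreal_mult)
    also have "\<dots> = ennreal (\<Sum>j\<in>N. g j \<omega> * e j \<omega>)"
      using gnn[OF \<omega>] assms(6)[OF \<omega>] by (intro sum_ennreal) simp
    finally show "ennreal (FDP \<omega>) \<le> (\<Sum>j\<in>N. ennreal (g j \<omega>) * ennreal (e j \<omega>))"
      using ptw[OF \<omega>] by (simp add: ennreal_leI)
  qed
  also have "\<dots> = (\<Sum>j\<in>N. \<integral>\<^sup>+\<omega>. ennreal (g j \<omega>) * ennreal (e j \<omega>) \<partial>M)"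
    by (rule nn_integral_sum) measurable
  also have "\<dots> \<le> (\<Sum>j\<in>N. \<integral>\<^sup>+\<omega>. ennreal (g j \<omega>) \<partial>M)"
    by (rule sum_mono) (rule step)
  also have "\<dots> \<le> (\<Sum>j\<in>{1..t}. \<integral>\<^sup>+\<omega>. ennreal (g j \<omega>) \<partial>M)"
    by (rule sum_mono2) (auto simp: N_def)
  also have "\<dots> = (\<integral>\<^sup>+\<omega>. (\<Sum>j\<in>{1..t}. ennreal (g j \<omega>)) \<partial>M)"
    by (rule nn_integral_sum[symmetric]) measurable
  also have "\<dots> \<le> (\<integral>\<^sup>+\<omega>. ennreal \<alpha> \<partial>M)"
  proof (rule nn_integral_mono_AE)
    show "AE \<omega> in M. (\<Sum>j\<in>{1..t}. ennreal (g j \<omega>)) \<le> ennreal \<alpha>"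
      using assms(11) AE_space
    proof eventually_elim
      case (elim \<omega>)
      note H = elim(1) and \<omega> = elim(2)
      have "(\<Sum>j\<in>{1..t}. ennreal (g j \<omega>)) = ennreal (\<Sum>j\<in>{1..t}. g j \<omega>)"
        using gnn[OF \<omega>] by (intro sum_ennreal) simp
      also have "\<dots> \<le> ennreal \<alpha>" using H t1 unfolding g_def by (auto intro: ennreal_leI)
      finally show "(\<Sum>j\<in>{1..t}. ennreal (g j \<omega>)) \<le> ennreal \<alpha>" .
    qed
  qed
  also have "\<dots> = ennreal \<alpha>" by (simp add: P.emeasure_space_1)
  finally have I: "(\<integral>\<^sup>+\<omega>. ennreal (FDP \<omega>) \<partial>M) \<le> ennreal \<alpha>" .
  have "FDR M theta alpha e t = integral\<^sup>L M FDP"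
    unfolding FDR_def FDP_def N_def ..
  also have "\<dots> = enn2real (\<integral>\<^sup>+\<omega>. ennreal (FDP \<omega>) \<partial>M)"
    by (rule integral_eq_nn_integral) (auto intro: FDPnn)
  also have "\<dots> \<le> \<alpha>" using I assms(2) by (intro enn2real_leI) auto
  finally show "FDR M theta alpha e t \<le> \<alpha>" .
qed

end
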